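(* Let $n,k$ be positive integers and $i\in\{1,\ldots,n\}$ such that $k\cdot\frac{i}{n}\cdot \frac{n-i}{n}\ge 1$ and $n\ge 8k$. If $H\sim\text{Hyp}(n,i,k)$, then $\mathbb{P}(H \ge ik/n) \ge k/n$.
   Context: $\text{Hyp}(n,i,k)$ denotes the hypergeometric distribution: the number of black marbles in a sample without replacement of size $k$ from an urn with $i$ black and $n-i$ white marbles, i.e. $\mathbb{P}(H=j)=\binom{i}{j}\binom{n-i}{k-j}/\binom{n}{k}$. *)

theory Defs
  imports Complex_Main
begin

text \<open>Hypergeometric distribution Hyp(n,i,k): number of black marbles in a sample
  without replacement of size k from an urn with i black and n-i white marbles.\<close>

definition hyp_pmf :: "nat \<Rightarrow> nat \<Rightarrow> nat \<Rightarrow> nat \<Rightarrow> real" where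
  "hyp_pmf n i k j =
     (if j \<le> k then real (i choose j) * real ((n - i) choose (k - j)) / real (n choose k) else 0)"

definition hyp_prob_ge :: "nat \<Rightarrow> nat \<Rightarrow> nat \<Rightarrow> real \<Rightarrow> real" where
  "hyp_prob_ge n i k t = (\<Sum>j \<in> {j. j \<le> k \<and> real j \<ge> t}. hyp_pmf n i k j)"

end

theory Submission
  imports Defs
begin

lemma stein_nat1: "(i - j) * (i choose j) = Suc j * (i choose Suc j)"
  by (metis binomial_absorb_comp binomial_absorption)

lemma stein_real1: "(real i - real j) * real (i choose j) = (real j + 1) * real (i choose Suc j)"
proof (cases "j \<le> i")
  case True
  have "real ((i - j) * (i choose j)) = real (Suc j * (i choose Suc j))"
    using stein_nat1 by metis
  then show ?thesis using True by (simp add: of_nat_diff algebra_simps)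
next
  case False
  then show ?thesis by (simp add: binomial_eq_0)
qed

lemma stein_real2:
  assumes "0 < r"
  shows "real r * real (N choose r) = (real N - real r + 1) * real (N choose (r - 1))"
proof (cases "r - 1 \<le> N")
  case True
  have a: "r * (N choose r) = N * ((N - 1) choose (r - 1))"
    using times_binomial_minus1_eq[OF assms] .
  have b: "(N - (r - 1)) * (N choose (r - 1)) = N * ((N - 1) choose (r - 1))"
    by (rule binomial_absorb_comp)
  have "real (r * (N choose r)) = real ((N - (r - 1)) * (N choose (r - 1)))"
    using a b by simp
  then show ?thesis using True assms by (simp add: of_nat_diff)
next
  case False
  then show ?thesis by (simp add: binomial_eq_0)
qed

lemma weighted_cs:
  fixes w y :: "nat \<Rightarrow> real"
  assumes "finite S" "\<And>j. j \<in> S \<Longrightarrow> 0 \<le> w j"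
  shows "(\<Sum>j\<in>S. w j * y j)^2 \<le> (\<Sum>j\<in>S. w j) * (\<Sum>j\<in>S. w j * (y j)^2)"
proof -
  define a where "a = (\<Sum>j\<in>S. w j)"
  define b where "b = (\<Sum>j\<in>S. w j * y j)"
  define d where "d = (\<Sum>j\<in>S. w j * (y j)^2)"
  have "0 \<le> (\<Sum>j\<in>S. w j * (a * y j - b)^2)"
    using assms by (intro sum_nonneg) auto
  also have "(\<Sum>j\<in>S. w j * (a * y j - b)^2) = (\<Sum>j\<in>S. a^2 * (w j * (y j)^2) - 2*a*b*(w j * y j) + b^2 * w j)"
    by (rule sum.cong) (auto simp: power2_eq_square algebra_simps)
  also have "\<dots> = a^2 * d - 2*a*b*b + b^2 * a"
    by (simp add: sum.distrib sum_subtractf sum_distrib_left[symmetric] a_def b_def d_def)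
  finally have 1: "0 \<le> a * (a * d - b^2)" by (simp add: algebra_simps power2_eq_square)
  have a0: "0 \<le> a" unfolding a_def using assms by (intro sum_nonneg) auto
  show ?thesis
  proof (cases "a = 0")
    case True
    then have "\<forall>j\<in>S. w j = 0" unfolding a_def using assms sum_nonneg_eq_0_iff by blast
    then have "b = 0" unfolding b_def by simp
    then show ?thesis using True unfolding a_def b_def d_def by simp
  next
    case False
    then have "a > 0" using a0 by simp
    then have "0 \<le> a * d - b^2" using 1 by (simp add: zero_le_mult_iff)
    then show ?thesis unfolding a_def b_def d_def by simp
  qed
qed

lemma left_quad:
  fixes f :: "nat \<Rightarrow> real"
  assumes "\<And>j. j \<le> s \<Longrightarrow> 0 \<le> f j \<and> f j \<le> g"
  shows "(\<Sum>j\<le>s. f j)^2 \<le> g * (\<Sum>j\<le>s. (2 * (real s - real j) + 1) * f j)"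
  using assms
proof (induction s)
  case 0
  then have "f 0 * f 0 \<le> g * f 0" by (simp add: mult_right_mono)
  then show ?case by (simp add: power2_eq_square)
next
  case (Suc s)
  define F where "F = (\<Sum>j\<le>s. f j)"
  have IH: "F^2 \<le> g * (\<Sum>j\<le>s. (2 * (real s - real j) + 1) * f j)"
    unfolding F_def using Suc by simp
  have F0: "0 \<le> F" unfolding F_def using Suc.prems by (intro sum_nonneg) auto
  have fs: "0 \<le> f (Suc s)" "f (Suc s) \<le> g" using Suc.prems by auto
  have Fb: "F \<le> real (Suc s) * g"
  proof -
    have "F \<le> (\<Sum>j\<le>s. g)" unfolding F_def using Suc.prems by (intro sum_mono) auto
    then show ?thesis by simp
  qed
  have w: "(\<Sum>j\<le>Suc s. (2 * (real (Suc s) - real j) + 1) * f j)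
      = (\<Sum>j\<le>s. (2 * (real s - real j) + 1) * f j) + 2 * F + f (Suc s)"
  proof -
    have "(\<Sum>j\<le>s. (2 * (real (Suc s) - real j) + 1) * f j) = (\<Sum>j\<le>s. (2 * (real s - real j) + 1) * f j + 2 * f j)"
      by (rule sum.cong) (auto simp: algebra_simps)
    also have "\<dots> = (\<Sum>j\<le>s. (2 * (real s - real j) + 1) * f j) + 2 * F"
      unfolding F_def by (simp add: sum.distrib sum_distrib_left)
    finally show ?thesis by simp
  qed
  have "(\<Sum>j\<le>Suc s. f j)^2 = F^2 + 2 * F * f (Suc s) + f (Suc s) * f (Suc s)"
    unfolding F_def by (simp add: power2_eq_square algebra_simps)
  also have "\<dots> \<le> g * (\<Sum>j\<le>s. (2 * (real s - real j) + 1) * f j) + 2 * F * g + g * f (Suc s)"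
  proof -
    have "2 * F * f (Suc s) \<le> 2 * F * g" using F0 fs by (simp add: mult_left_mono)
    moreover have "f (Suc s) * f (Suc s) \<le> g * f (Suc s)" using fs by (simp add: mult_right_mono)
    ultimately show ?thesis using IH by linarith
  qed
  also have "\<dots> = g * (\<Sum>j\<le>Suc s. (2 * (real (Suc s) - real j) + 1) * f j)"
    using w by (simp add: algebra_simps)
  finally show ?case .
qed

lemma hyp_stein:
  assumes "j < k" "i \<le> n"
  shows "(real i - real j) * (real k - real j) * hyp_pmf n i k j
       = (real j + 1) * (real n - real i - real k + real j + 1) * hyp_pmf n i k (Suc j)"
proof -
  define r where "r = k - j"
  have r0: "0 < r" using assms unfolding r_def by simp
  have rk: "real r = real k - real j" unfolding r_def using assms by (simp add: of_nat_diff)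
  have r1: "k - Suc j = r - 1" unfolding r_def by simp
  have N: "real (n - i) = real n - real i" using assms by (simp add: of_nat_diff)
  note e1 = stein_real1[of i j]
  have e2: "real r * real ((n - i) choose r) = (real (n - i) - real r + 1) * real ((n - i) choose (r - 1))"
    using stein_real2[OF r0] .
  have "(real i - real j) * (real k - real j) * hyp_pmf n i k j
      = ((real i - real j) * real (i choose j)) * (real r * real ((n - i) choose r)) / real (n choose k)"
    using assms unfolding hyp_pmf_def r_def by (simp add: rk[unfolded r_def])
  also have "\<dots> = ((real j + 1) * real (i choose Suc j)) * ((real (n - i) - real r + 1) * real ((n - i) choose (r - 1))) / real (n choose k)"
    using e1 e2 by simp
  also have "\<dots> = (real j + 1) * (real n - real i - real k + real j + 1) * hyp_pmf n i k (Suc j)"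
    using assms unfolding hyp_pmf_def by (simp add: r1 N rk)
  finally show ?thesis .
qed

lemma tele:
  fixes q :: "nat \<Rightarrow> real"
  assumes n0: "0 < n"
    and st: "\<And>j. j < k \<Longrightarrow> (real i - real j) * (real k - real j) * q j
                 = (real j + 1) * (real n - real i - real k + real j + 1) * q (Suc j)"
  shows "t \<le> k \<Longrightarrow> (\<Sum>j\<le>t. (real i * real k / real n - real j) * q j)
          = (real i - real t) * (real k - real t) * q t / real n"
proof (induction t)
  case 0
  then show ?case by simp
next
  case (Suc t)
  then have tk: "t < k" by simp
  have IH: "(\<Sum>j\<le>t. (real i * real k / real n - real j) * q j) = (real i - real t) * (real k - real t) * q t / real n"
    using Suc by simp
  have "(\<Sum>j\<le>Suc t. (real i * real k / real n - real j) * q j)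
      = (real i - real t) * (real k - real t) * q t / real n + (real i * real k / real n - real (Suc t)) * q (Suc t)"
    using IH by simp
  also have "\<dots> = (real t + 1) * (real n - real i - real k + real t + 1) * q (Suc t) / real n + (real i * real k / real n - real (Suc t)) * q (Suc t)"
    using st[OF tk] by simp
  also have "\<dots> = (real i - real (Suc t)) * (real k - real (Suc t)) * q (Suc t) / real n"
    using n0 by (simp add: field_simps)
  finally show ?case .
qed

lemma sbp:
  fixes f :: "nat \<Rightarrow> real"
  shows "(\<Sum>j\<le>t. (mu - real j)^2 * f j)
     = (\<Sum>j<t. (\<Sum>l\<le>j. (mu - real l) * f l)) + (mu - real t) * (\<Sum>l\<le>t. (mu - real l) * f l)"
proof (induction t)
  case 0
  then show ?case by (simp add: power2_eq_square)
next
  case (Suc t)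
  then show ?case by (simp add: power2_eq_square algebra_simps)
qed

lemma hyp_sum_one:
  assumes "i \<le> n" "k \<le> n"
  shows "(\<Sum>j\<le>k. hyp_pmf n i k j) = 1"
proof -
  have v: "(\<Sum>j\<le>k. (i choose j) * ((n - i) choose (k - j))) = n choose k"
    using vandermonde[where r=k and m=i and n="n - i"] assms by simp
  have pos: "0 < real (n choose k)" using assms by simp
  have "(\<Sum>j\<le>k. hyp_pmf n i k j) = (\<Sum>j\<le>k. real ((i choose j) * ((n - i) choose (k - j)))) / real (n choose k)"
    unfolding hyp_pmf_def by (simp add: sum_divide_distrib)
  also have "\<dots> = 1" using pos by (simp only: of_nat_sum[symmetric] v) simp
  finally show ?thesis .
qed

lemma absorb_real: "(real i - real j) * real (i choose j) = real i * real ((i - 1) choose j)"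
proof (cases "j \<le> i")
  case True
  have "real ((i - j) * (i choose j)) = real (i * ((i - 1) choose j))"
    using binomial_absorb_comp by metis
  then show ?thesis using True by (simp add: of_nat_diff)
next
  case False
  then show ?thesis by (simp add: binomial_eq_0)
qed

lemma hyp_var_aux:
  assumes "1 \<le> i" "i < n" "1 \<le> k" "k < n"
  shows "(\<Sum>j<k. (real i - real j) * (real k - real j) * hyp_pmf n i k j)
       = real i * real (n - i) * real k * real (n - k) / (real n * (real n - 1))"
proof -
  define N where "N = n - i"
  have N1: "1 \<le> N" unfolding N_def using assms by simp
  have tm: "(real i - real j) * (real k - real j) * hyp_pmf n i k j
      = real i * real N * real (((i - 1) choose j) * ((N - 1) choose ((k - 1) - j))) / real (n choose k)"
    if "j < k" for j
  proof -
    have kj: "0 < k - j" using that by simp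
    have "real (k - j) * real (N choose (k - j)) = real N * real ((N - 1) choose (k - j - 1))"
      using times_binomial_minus1_eq[OF kj, of N] by (metis of_nat_mult)
    moreover have "real (k - j) = real k - real j" using that by (simp add: of_nat_diff)
    moreover have "k - j - 1 = (k - 1) - j" by simp
    ultimately have e: "(real k - real j) * real (N choose (k - j)) = real N * real ((N - 1) choose ((k - 1) - j))"
      by simp
    have "(real i - real j) * (real k - real j) * hyp_pmf n i k j
        = ((real i - real j) * real (i choose j)) * ((real k - real j) * real (N choose (k - j))) / real (n choose k)"
      using that unfolding hyp_pmf_def N_def by simp
    also have "\<dots> = (real i * real ((i - 1) choose j)) * (real N * real ((N - 1) choose ((k - 1) - j))) / real (n choose k)"
      using absorb_real[of i j] e by simp
    finally show ?thesis by simp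
  qed
  have "(\<Sum>j<k. (real i - real j) * (real k - real j) * hyp_pmf n i k j)
      = (\<Sum>j<k. real i * real N * real (((i - 1) choose j) * ((N - 1) choose ((k - 1) - j))) / real (n choose k))"
    using tm by (intro sum.cong) auto
  also have "\<dots> = real i * real N * real (\<Sum>j<k. ((i - 1) choose j) * ((N - 1) choose ((k - 1) - j))) / real (n choose k)"
    by (simp add: sum_divide_distrib[symmetric] sum_distrib_left[symmetric])
  also have "(\<Sum>j<k. ((i - 1) choose j) * ((N - 1) choose ((k - 1) - j))) = (\<Sum>j\<le>k - 1. ((i - 1) choose j) * ((N - 1) choose ((k - 1) - j)))"
    using assms by (intro sum.cong) auto
  also have "\<dots> = (n - 2) choose (k - 1)"
    using vandermonde[where r="k - 1" and m="i - 1" and n="N - 1"] assms N1 unfolding N_def by simp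
  finally have s1: "(\<Sum>j<k. (real i - real j) * (real k - real j) * hyp_pmf n i k j)
      = real i * real N * real ((n - 2) choose (k - 1)) / real (n choose k)" .
  have b1: "k * (n choose k) = n * ((n - 1) choose (k - 1))"
    using times_binomial_minus1_eq assms by simp
  have b2: "((n - 1) - (k - 1)) * ((n - 1) choose (k - 1)) = (n - 1) * ((n - 1 - 1) choose (k - 1))"
    by (rule binomial_absorb_comp)
  have b3: "(n - 1) - (k - 1) = n - k" using assms by simp
  have "k * (n - k) * (n choose k) = n * (n - 1) * ((n - 2) choose (k - 1))"
  proof -
    have "k * (n - k) * (n choose k) = n * ((n - k) * ((n - 1) choose (k - 1)))"
      using b1 by (metis mult.assoc mult.commute)
    also have "\<dots> = n * ((n - 1) * ((n - 2) choose (k - 1)))"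
      using b2 b3 by (simp add: numeral_2_eq_2)
    finally show ?thesis by simp
  qed
  then have "real (k * (n - k) * (n choose k)) = real (n * (n - 1) * ((n - 2) choose (k - 1)))"
    by simp
  then have b: "real k * (real n - real k) * real (n choose k) = real n * (real n - 1) * real ((n - 2) choose (k - 1))"
    using assms by (simp add: of_nat_diff)
  have pos: "0 < real (n choose k)" using assms by simp
  have n1: "0 < real n * (real n - 1)" using assms by simp
  have c: "real ((n - 2) choose (k - 1)) = real k * (real n - real k) * real (n choose k) / (real n * (real n - 1))"
  proof (rule eq_divide_imp)
    show "real n * (real n - 1) \<noteq> 0" using n1 by linarith
    show "real ((n - 2) choose (k - 1)) * (real n * (real n - 1)) = real k * (real n - real k) * real (n choose k)"
      using b by (simp only: ac_simps)
  qed
  have "real i * real N * real ((n - 2) choose (k - 1)) / real (n choose k)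
      = real i * real N * (real k * (real n - real k)) / (real n * (real n - 1))"
    unfolding c using pos by simp
  then show ?thesis using s1 assms unfolding N_def by (simp add: of_nat_diff)
qed

theorem lemma8:
  fixes n k i :: nat
  assumes "n > 0" and "k > 0"
    and "1 \<le> i" and "i \<le> n"
    and "real k * (real i / real n) * (real (n - i) / real n) \<ge> 1"
    and "real n \<ge> 8 * real k"
  shows "hyp_prob_ge n i k (real i * real k / real n) \<ge> real k / real n"
proof -
  note n0 = assms(1) and k0 = assms(2) and i1 = assms(3) and iN = assms(4)
    and hv = assms(5) and h8 = assms(6)
  define q where "q = hyp_pmf n i k"
  define mu where "mu = real i * real k / real n"
  define c where "c = real i * real (n - i) * real k * real (n - k) / ((real n)^2 * (real n - 1))"
  have rn: "0 < real n" using n0 by simp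
  have kn: "k < n" using h8 k0 by simp
  have n8: "8 \<le> real n" using h8 k0 by simp
  have Ni: "real (n - i) = real n - real i" using iN by (simp add: of_nat_diff)
  have Nk: "real (n - k) = real n - real k" using kn by (simp add: of_nat_diff)
  have hv': "(real n)^2 \<le> real k * real i * (real n - real i)"
  proof -
    have "real k * (real i / real n) * (real (n - i) / real n) = real k * real i * (real n - real i) / (real n)^2"
      using Ni by (simp add: power2_eq_square)
    then show ?thesis using hv rn Ni by (simp add: le_divide_eq power2_eq_square)
  qed
  have iltn: "i < n"
  proof (rule ccontr)
    assume "\<not> i < n"
    then have "i = n" using iN by simp
    then show False using hv' rn by simp
  qed
  have q0: "\<And>j. 0 \<le> q j" unfolding q_def hyp_pmf_def by simp
  have mu1: "1 \<le> mu"
  proof -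
    have "real k * real i * (real n - real i) \<le> real k * real i * real n"
      by (intro mult_left_mono) auto
    then have "(real n)^2 \<le> real k * real i * real n" using hv' by linarith
    then have "real n * real n \<le> (real i * real k) * real n" by (simp add: power2_eq_square algebra_simps)
    then have "real n \<le> real i * real k" using rn by simp
    then show ?thesis unfolding mu_def using rn by (simp add: le_divide_eq)
  qed
  have muk: "mu \<le> real k"
  proof -
    have "real i * real k \<le> real n * real k" using iN by (intro mult_right_mono) auto
    then show ?thesis unfolding mu_def using rn by (simp add: divide_le_eq mult.commute)
  qed
  have mui: "mu \<le> real i"
  proof -
    have "real i * real k \<le> real i * real n" using kn by (intro mult_left_mono) auto
    then show ?thesis unfolding mu_def using rn by (simp add: divide_le_eq mult.commute)
  qed
  define s where "s = nat \<lceil>mu\<rceil> - 1"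
  have ce1: "1 \<le> \<lceil>mu\<rceil>" using mu1 by linarith
  have rs: "real s = real_of_int \<lceil>mu\<rceil> - 1"
  proof -
    have a: "1 \<le> nat \<lceil>mu\<rceil>" using ce1 by linarith
    have "real s = real (nat \<lceil>mu\<rceil>) - 1" unfolding s_def using a by (simp add: of_nat_diff)
    moreover have "real (nat \<lceil>mu\<rceil>) = real_of_int \<lceil>mu\<rceil>" using ce1 by simp
    ultimately show ?thesis by simp
  qed
  have slt: "real s < mu" using rs ceiling_correct[of mu] by linarith
  have sge: "mu \<le> real s + 1" using rs by linarith
  have sk: "s < k" using slt muk by simp
  have st: "\<And>j. j < k \<Longrightarrow> (real i - real j) * (real k - real j) * q j
                 = (real j + 1) * (real n - real i - real k + real j + 1) * q (Suc j)"
    unfolding q_def using hyp_stein iN by blast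
  have tl: "\<And>t. t \<le> k \<Longrightarrow> (\<Sum>j\<le>t. (mu - real j) * q j) = (real i - real t) * (real k - real t) * q t / real n"
    unfolding mu_def using tele[OF n0 st] by blast
  have sum1: "(\<Sum>j\<le>k. q j) = 1" unfolding q_def using hyp_sum_one iN kn by simp
  have var: "(\<Sum>j\<le>k. (mu - real j)^2 * q j) = c"
  proof -
    have "(\<Sum>j\<le>k. (mu - real j)^2 * q j)
        = (\<Sum>j<k. (\<Sum>l\<le>j. (mu - real l) * q l)) + (mu - real k) * (\<Sum>l\<le>k. (mu - real l) * q l)"
      by (rule sbp)
    also have "(\<Sum>l\<le>k. (mu - real l) * q l) = 0" using tl[of k] by simp
    also have "(\<Sum>j<k. (\<Sum>l\<le>j. (mu - real l) * q l)) = (\<Sum>j<k. (real i - real j) * (real k - real j) * q j / real n)"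
      using tl by (intro sum.cong) auto
    also have "\<dots> = (\<Sum>j<k. (real i - real j) * (real k - real j) * q j) / real n"
      by (simp add: sum_divide_distrib)
    also have "(\<Sum>j<k. (real i - real j) * (real k - real j) * q j)
        = real i * real (n - i) * real k * real (n - k) / (real n * (real n - 1))"
      unfolding q_def using hyp_var_aux i1 iltn k0 kn by simp
    finally show ?thesis unfolding c_def by (simp add: power2_eq_square)
  qed
  have c_ge: "(real n - real k) / (real n - 1) \<le> c"
  proof -
    have "c = (real k * real i * (real n - real i) / (real n)^2) * ((real n - real k) / (real n - 1))"
      unfolding c_def using Ni Nk by (simp add: field_simps)
    moreover have "1 \<le> real k * real i * (real n - real i) / (real n)^2"
      using hv' rn by (simp add: le_divide_eq)
    moreover have "0 \<le> (real n - real k) / (real n - 1)" using kn n8 by simp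
    ultimately show ?thesis by (metis mult_le_cancel_right1 linorder_not_le order_less_imp_le)
  qed
  have c78: "7/8 \<le> c"
  proof -
    have "7/8 \<le> (real n - real k) / (real n - 1)" using n8 h8 by (simp add: le_divide_eq)
    then show ?thesis using c_ge by linarith
  qed
  define T where "T = (\<Sum>j\<in>{Suc s..k}. q j)"
  define L where "L = (\<Sum>j\<le>s. q j)"
  have setT: "{j. j \<le> k \<and> real i * real k / real n \<le> real j} = {Suc s..k}"
  proof (rule set_eqI)
    fix j
    show "j \<in> {j. j \<le> k \<and> real i * real k / real n \<le> real j} \<longleftrightarrow> j \<in> {Suc s..k}"
    proof
      assume "j \<in> {j. j \<le> k \<and> real i * real k / real n \<le> real j}"
      then have "j \<le> k" "mu \<le> real j" unfolding mu_def by auto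
      then have "real s < real j" using slt by linarith
      then show "j \<in> {Suc s..k}" using \<open>j \<le> k\<close> by simp
    next
      assume "j \<in> {Suc s..k}"
      then have "j \<le> k" "real s + 1 \<le> real j" by auto
      then show "j \<in> {j. j \<le> k \<and> real i * real k / real n \<le> real j}"
        using sge unfolding mu_def by auto
    qed
  qed
  have goalT: "hyp_prob_ge n i k (real i * real k / real n) = T"
    unfolding hyp_prob_ge_def T_def q_def setT ..
  have split: "\<And>f :: nat \<Rightarrow> real. (\<Sum>j\<le>k. f j) = (\<Sum>j\<le>s. f j) + (\<Sum>j\<in>{Suc s..k}. f j)"
  proof -
    fix f :: "nat \<Rightarrow> real"
    have "{..k} = {..s} \<union> {Suc s..k}" using sk by auto
    moreover have "{..s} \<inter> {Suc s..k} = {}" by auto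
    ultimately show "(\<Sum>j\<le>k. f j) = (\<Sum>j\<le>s. f j) + (\<Sum>j\<in>{Suc s..k}. f j)"
      by (simp add: sum.union_disjoint)
  qed
  have TL: "T + L = 1" using split[of q] sum1 unfolding T_def L_def by simp
  have T0: "0 \<le> T" unfolding T_def using q0 by (intro sum_nonneg) auto
  have L0: "0 \<le> L" unfolding L_def using q0 by (intro sum_nonneg) auto
  define A where "A = (\<Sum>j\<le>s. (mu - real j) * q j)"
  define W where "W = (real i - real s) * (real k - real s) / real n"
  have AW: "A = W * q s" unfolding A_def W_def using tl[of s] sk by simp
  have A0: "0 \<le> A" unfolding A_def using q0 slt
    by (intro sum_nonneg) (auto intro!: mult_nonneg_nonneg)
  have Aright: "(\<Sum>j\<in>{Suc s..k}. q j * (real j - mu)) = A"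
  proof -
    have "(\<Sum>j\<le>k. (mu - real j) * q j) = 0" using tl[of k] by simp
    then have "A + (\<Sum>j\<in>{Suc s..k}. (mu - real j) * q j) = 0"
      using split[of "\<lambda>j. (mu - real j) * q j"] unfolding A_def by simp
    moreover have "(\<Sum>j\<in>{Suc s..k}. q j * (real j - mu)) = - (\<Sum>j\<in>{Suc s..k}. (mu - real j) * q j)"
      by (simp add: sum_negf[symmetric] algebra_simps)
    ultimately show ?thesis by simp
  qed
  have Aleft: "(\<Sum>j\<le>s. q j * (mu - real j)) = A" unfolding A_def by (simp add: mult.commute)
  define R2 where "R2 = (\<Sum>j\<in>{Suc s..k}. q j * (real j - mu)^2)"
  define L2 where "L2 = (\<Sum>j\<le>s. q j * (mu - real j)^2)"
  have RL2: "R2 + L2 = c"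
  proof -
    have "(\<Sum>j\<in>{Suc s..k}. q j * (real j - mu)^2) = (\<Sum>j\<in>{Suc s..k}. (mu - real j)^2 * q j)"
      by (simp add: power2_commute mult.commute)
    moreover have "L2 = (\<Sum>j\<le>s. (mu - real j)^2 * q j)" unfolding L2_def by (simp add: mult.commute)
    ultimately show ?thesis using split[of "\<lambda>j. (mu - real j)^2 * q j"] var unfolding R2_def by simp
  qed
  have csR: "A^2 \<le> T * R2"
    using weighted_cs[of "{Suc s..k}" q "\<lambda>j. real j - mu"] q0 unfolding Aright T_def R2_def by simp
  have csL: "A^2 \<le> L * L2"
    using weighted_cs[of "{..s}" q "\<lambda>j. mu - real j"] q0 unfolding Aleft L_def L2_def by simp
  have ATL: "A^2 \<le> T * L * c"
  proof -
    have "A^2 * L \<le> T * R2 * L" using csR L0 by (simp add: mult_right_mono)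
    moreover have "A^2 * T \<le> L * L2 * T" using csL T0 by (simp add: mult_right_mono)
    ultimately have "A^2 * (T + L) \<le> T * L * (R2 + L2)" by (simp add: algebra_simps)
    then show ?thesis using TL RL2 by simp
  qed
  have mono_step: "q j \<le> q (Suc j)" if "Suc j \<le> s" for j
  proof (cases "q j = 0")
    case True
    then show ?thesis using q0[of "Suc j"] by simp
  next
    case False
    have jk: "j < k" using that sk by simp
    then have "(n - i choose (k - j)) \<noteq> 0" using False unfolding q_def hyp_pmf_def by auto
    then have "k - j \<le> n - i" by (simp add: binomial_eq_0_iff)
    then have pos: "0 < real n - real i - real k + real j + 1" using jk iN by linarith
    define D where "D = (real j + 1) * (real n - real i - real k + real j + 1)"
    have D0: "0 < D" unfolding D_def using pos by simp
    have j1: "real j + 1 < mu" using that slt by linarith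
    have ik: "(real j + 1) * real n \<le> real i * real k"
      using j1 rn unfolding mu_def by (simp add: less_divide_eq)
    have "real j + 1 < real i" using j1 mui by linarith
    moreover have "real j + 1 < real k" using j1 muk by linarith
    moreover have "(real i - real j) * (real k - real j) - D
        = real i * real k - (real j + 1) * real n + real i + real k - 2 * real j - 1"
      unfolding D_def by (simp add: algebra_simps)
    ultimately have cmp: "D \<le> (real i - real j) * (real k - real j)" using ik by linarith
    have "D * q (Suc j) = (real i - real j) * (real k - real j) * q j"
      using st[OF jk] unfolding D_def by simp
    also have "\<dots> \<ge> D * q j" using cmp q0[of j] by (simp add: mult_right_mono)
    finally have "D * q j \<le> D * q (Suc j)" .
    then show ?thesis using D0 by simp
  qed
  have mono: "q j \<le> q s" if "j \<le> s" for j
    using that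
  proof (induction rule: dec_induct)
    case base
    then show ?case by simp
  next
    case (step m)
    then show ?case using mono_step[of m] by simp
  qed
  have lq: "L^2 \<le> q s * (\<Sum>j\<le>s. (2 * (real s - real j) + 1) * q j)"
    unfolding L_def using left_quad[of s q "q s"] q0 mono by blast
  define S1 where "S1 = (\<Sum>j\<le>s. (real s - real j) * q j)"
  have S1A: "S1 \<le> A" unfolding S1_def A_def using slt q0
    by (intro sum_mono mult_right_mono) auto
  have "(\<Sum>j\<le>s. (2 * (real s - real j) + 1) * q j) = 2 * S1 + L"
  proof -
    have "(\<Sum>j\<le>s. (2 * (real s - real j) + 1) * q j) = (\<Sum>j\<le>s. 2 * ((real s - real j) * q j) + q j)"
      by (rule sum.cong) (auto simp: algebra_simps)
    then show ?thesis unfolding S1_def L_def by (simp add: sum.distrib sum_distrib_left)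
  qed
  with lq have lq2: "L^2 \<le> q s * (2 * S1 + L)" by simp
  have W0: "0 \<le> W" unfolding W_def using slt muk mui rn by (intro divide_nonneg_pos mult_nonneg_nonneg) auto
  have WL: "W * L^2 \<le> A * (2 * A + L)"
  proof -
    have "W * L^2 \<le> W * (q s * (2 * S1 + L))" using lq2 W0 by (simp add: mult_left_mono)
    also have "\<dots> = A * (2 * S1 + L)" using AW by simp
    also have "\<dots> \<le> A * (2 * A + L)" using S1A A0 by (simp add: mult_left_mono)
    finally show ?thesis .
  qed
  have Wc: "c * (real n - 1) / real n \<le> W"
  proof -
    have e: "c * (real n - 1) / real n = (real i - mu) * (real k - mu) / real n"
      unfolding c_def mu_def using Ni Nk n8 by (simp add: field_simps power2_eq_square)
    have "(real i - mu) * (real k - mu) \<le> (real i - real s) * (real k - real s)"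
      using slt mui muk by (intro mult_mono) auto
    then show ?thesis unfolding e W_def using rn by (simp add: divide_right_mono)
  qed
  show ?thesis
  proof (rule ccontr)
    assume "\<not> real k / real n \<le> hyp_prob_ge n i k (real i * real k / real n)"
    then have Tx: "T < real k / real n" unfolding goalT by simp
    define c' where "c' = c * real k / (real n - real k)"
    have nk: "0 < real n - real k" using kn by simp
    have c0: "0 < c" using c78 by simp
    have c'7: "c' \<le> c / 7"
    proof -
      have "real k / (real n - real k) \<le> 1 / 7" using h8 nk by (simp add: divide_le_eq)
      then have "c * (real k / (real n - real k)) \<le> c * (1/7)" using c0 by (intro mult_left_mono) auto
      then show ?thesis unfolding c'_def by simp
    qed
    have c'0: "0 \<le> c'" unfolding c'_def using c0 nk by simp
    have W78: "7/8 * c \<le> W"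
    proof -
      have "7/8 \<le> (real n - 1) / real n" using n8 rn by (simp add: le_divide_eq)
      then have "c * (7/8) \<le> c * ((real n - 1) / real n)" using c0 by (intro mult_left_mono) auto
      moreover have "c * ((real n - 1) / real n) = c * (real n - 1) / real n" by simp
      ultimately show ?thesis using Wc by linarith
    qed
    have E0: "33/56 * c \<le> W - 2 * c'" using W78 c'7 by linarith
    have E1: "c' \<le> (W - 2 * c')^2"
    proof -
      have "(33/56 * c)^2 \<le> (W - 2 * c')^2" using E0 c0 by (intro power_mono) auto
      moreover have "c / 7 \<le> (33/56 * c)^2"
      proof -
        have "1/7 \<le> (33/56)^2 * c" using c78 by (simp add: power2_eq_square)
        then have "c * (1/7) \<le> c * ((33/56)^2 * c)" using c0 by (intro mult_left_mono) auto
        then show ?thesis by (simp add: power2_eq_square algebra_simps)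
      qed
      ultimately show ?thesis using c'7 by linarith
    qed
    have "real k / real n \<le> 1" using kn rn by (simp add: divide_le_eq)
    then have Lpos: "0 < L" using TL Tx by linarith
    have A2: "A^2 < c' * L^2"
    proof -
      have "T * real n < real k" using Tx rn by (simp add: less_divide_eq)
      then have "T * (real n - real k) < real k * (1 - T)" by (simp add: algebra_simps)
      moreover have "L = 1 - T" using TL by simp
      ultimately have "T * (real n - real k) < real k * L" by simp
      then have "T < real k * L / (real n - real k)" using nk by (simp add: less_divide_eq)
      then have "T * (L * c) < (real k * L / (real n - real k)) * (L * c)"
        using Lpos c0 by (intro mult_strict_right_mono) auto
      moreover have "(real k * L / (real n - real k)) * (L * c) = c' * L^2"
        unfolding c'_def by (simp add: power2_eq_square field_simps)
      ultimately show ?thesis using ATL by (simp add: mult.assoc)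
    qed
    have "(W - 2 * c') * L^2 < A * L"
    proof -
      have "W * L^2 \<le> 2 * A^2 + A * L" using WL by (simp add: algebra_simps power2_eq_square)
      then show ?thesis using A2 by (simp add: algebra_simps)
    qed
    then have F1: "(W - 2 * c') * L < A" using Lpos by (simp add: power2_eq_square mult.assoc[symmetric]) 
    have F2: "0 \<le> (W - 2 * c') * L" using E0 c0 Lpos by simp
    have "((W - 2 * c') * L)^2 < A^2" using F1 F2 by (intro power_strict_mono) auto
    then have "(W - 2 * c')^2 * L^2 < c' * L^2" using A2 by (simp add: power_mult_distrib)
    then have "(W - 2 * c')^2 < c'" using Lpos by simp
    then show False using E1 by simp
  qed
qed

end
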